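(* Let $K$ be an algebraically closed field and $m>1$. If $a,b$ are endomorphisms of $K^m$ whose commutator $c=ab-ba$ has rank at most one, then $a$ and $b$ have a common invariant subspace $U$ with $0\ne U\ne K^m$. *)

theory Defs
  imports "HOL-Analysis.Analysis" "HOL-Computational_Algebra.Polynomial"
begin

end

theory Submission imports Defs "Jordan_Normal_Form.Char_Poly" begin
lemma eig_ex:
  fixes A :: "'a::alg_closed_field mat"
  assumes "A \<in> carrier_mat n n" "n > 0"
  shows "\<exists>k v. v \<in> carrier_vec n \<and> v \<noteq> 0\<^sub>v n \<and> A *\<^sub>v v = k \<cdot>\<^sub>v v"
proof -
  have "degree (char_poly A) > 0" using degree_monic_char_poly[OF assms(1)] assms(2) by simp
  then obtain k where "poly (char_poly A) k = 0" using alg_closed_imp_poly_has_root by blast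
  then have "eigenvalue A k" using eigenvalue_root_char_poly[OF assms(1)] by simp
  then show ?thesis unfolding eigenvalue_def eigenvector_def using assms(1) by auto
qed

lemma eig_vec:
  fixes a :: "'a::alg_closed_field^'n^'n"
  shows "\<exists>k w. w \<noteq> 0 \<and> a *v w = k *s w"
proof -
  let ?n = "CARD('n)"
  obtain h where h: "bij_betw h {0..<?n} (UNIV::'n set)"
    using ex_bij_betw_nat_finite[of "UNIV::'n set"] by auto
  define g where "g = inv_into {0..<?n} h"
  have hg: "h (g x) = x" for x using h unfolding g_def
    by (meson UNIV_I bij_betw_inv_into_right)
  have gh: "i < ?n \<Longrightarrow> g (h i) = i" for i using bij_betw_inv_into_left[OF h] g_def by auto
  have gl: "g x < ?n" for x using h unfolding g_def
    by (metis UNIV_I atLeastLessThan_iff bij_betw_def inv_into_into)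
  define A where "A = Matrix.mat ?n ?n (\<lambda>(i,j). a $ h i $ h j)"
  have Ac: "A \<in> carrier_mat ?n ?n" unfolding A_def by simp
  obtain k v where v: "v \<in> carrier_vec ?n" "v \<noteq> 0\<^sub>v ?n" "A *\<^sub>v v = k \<cdot>\<^sub>v v"
    using eig_ex[OF Ac] by auto
  define w where "w = (\<chi> x. vec_index v (g x))"
  have wh: "i < ?n \<Longrightarrow> vec_nth w (h i) = vec_index v i" for i by (simp add: w_def gh)
  have "w \<noteq> 0"
  proof
    assume "w = 0"
    then have "vec_index v i = 0" if "i < ?n" for i using wh[OF that] by simp
    then have "v = 0\<^sub>v ?n" using v(1) by (intro eq_vecI) auto
    with v(2) show False by simp
  qed
  moreover have "a *v w = k *s w"
  proof (subst Finite_Cartesian_Product.vec_eq_iff, intro allI)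
    fix x
    have "vec_nth (a *v w) x = (\<Sum>j\<in>UNIV. a $ x $ j * vec_nth w j)"
      by (simp add: matrix_vector_mult_def)
    also have "\<dots> = (\<Sum>i\<in>{0..<?n}. a $ x $ h i * vec_nth w (h i))"
      by (rule sum.reindex_bij_betw[OF h, symmetric])
    also have "\<dots> = (\<Sum>i\<in>{0..<?n}. a $ x $ h i * vec_index v i)"
      by (rule sum.cong) (auto simp: wh)
    also have "\<dots> = vec_index (A *\<^sub>v v) (g x)"
      using v(1) gl[of x] by (simp add: A_def scalar_prod_def hg mult.commute)
    also have "\<dots> = k * vec_nth w x"
      using v(3) gl[of x] v(1) by (simp add: w_def)
    finally show "vec_nth (a *v w) x = vec_nth (k *s w) x" by simp
  qed
  ultimately show ?thesis by blast
qed

lemma rank1: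
  fixes c :: "'a::field^'n^'n"
  assumes "rank c \<le> 1" "c *v x0 \<noteq> 0"
  shows "\<exists>s. c *v x = s *s (c *v x0)"
proof -
  obtain B where B: "B \<subseteq> Finite_Cartesian_Product.rows c" "vec.independent B" "Finite_Cartesian_Product.rows c \<subseteq> vec.span B"
      "card B = vec.dim (Finite_Cartesian_Product.rows c)"
    using vec.basis_exists[of "Finite_Cartesian_Product.rows c"] by blast
  have fB: "finite B" using B(2) vec.finiteI_independent by blast
  have cB: "card B \<le> 1" using B(4) assms(1) unfolding row_rank_def_gen by simp
  obtain r where r: "Finite_Cartesian_Product.rows c \<subseteq> vec.span {r}"
  proof (cases "B = {}")
    case True
    have "vec.span {} \<subseteq> vec.span {0::'a^'n}" by (rule vec.span_mono) auto
    then show ?thesis using B(3) True that[of 0] by auto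
  next
    case False
    then have "card B = 1" using cB fB by (simp add: card_gt_0_iff le_eq_less_or_eq)
    then obtain r where "B = {r}" using card_1_singletonE by blast
    then show ?thesis using B(3) that by auto
  qed
  have "\<forall>i. \<exists>t. Finite_Cartesian_Product.row i c = t *s r"
  proof
    fix i
    have "Finite_Cartesian_Product.row i c \<in> Finite_Cartesian_Product.rows c" by (auto simp: Finite_Cartesian_Product.rows_def)
    then show "\<exists>t. Finite_Cartesian_Product.row i c = t *s r" using r vec.span_singleton by blast
  qed
  then obtain t where t: "\<And>i. Finite_Cartesian_Product.row i c = t i *s r" by metis
  have cij: "c $ i $ j = t i * r $ j" for i j
    using arg_cong[OF t[of i], of "\<lambda>v. v $ j"] by (simp add: Finite_Cartesian_Product.row_def)
  define D where "D y = (\<Sum>j\<in>UNIV. r$j * y$j)" for y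
  have cx: "c *v y = D y *s (\<chi> i. t i)" for y
    by (simp add: Finite_Cartesian_Product.vec_eq_iff matrix_vector_mult_def cij D_def sum_distrib_left mult_ac)
  have "D x0 \<noteq> 0" using assms(2) cx[of x0] by auto
  then have "c *v x = (D x / D x0) *s (c *v x0)" by (simp add: cx)
  then show ?thesis by blast
qed

theorem lemma2p1:
  fixes a b :: "'a::alg_closed_field ^ 'n ^ 'n"
  assumes "CARD('n) > 1"
    and "rank (a ** b - b ** a) \<le> 1"
  shows "\<exists>U. vec.subspace U \<and> U \<noteq> {0} \<and> U \<noteq> UNIV \<and>
             (\<forall>x\<in>U. a *v x \<in> U \<and> b *v x \<in> U)"
proof -
  obtain l w where w: "w \<noteq> 0" "a *v w = l *s w" using eig_vec by blast
  define M where "M = a - Finite_Cartesian_Product.mat l"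
  have ml: "Finite_Cartesian_Product.mat l *v x = l *s x" for x
  proof -
    have e: "(if P then l else 0) * y = (if P then l * y else 0)" for P and y :: 'a by simp
    show ?thesis
      by (simp add: Finite_Cartesian_Product.vec_eq_iff matrix_vector_mult_def
        Finite_Cartesian_Product.mat_def e sum.delta)
  qed
  have Mx: "M *v x = a *v x - l *s x" for x
    by (simp add: M_def matrix_vector_mult_diff_rdistrib ml)
  define c where "c = a ** b - b ** a"
  have cx: "c *v x = a *v (b *v x) - b *v (a *v x)" for x
    by (simp add: c_def matrix_vector_mult_diff_rdistrib matrix_vector_mul_assoc)
  have rk: "rank c \<le> 1" using assms(2) c_def by simp
  show ?thesis
  proof (cases "\<forall>x. a *v x = l *s x")
    case sc: True
    obtain m u where u: "u \<noteq> 0" "b *v u = m *s u" using eig_vec by blast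
    let ?U = "range (\<lambda>t. t *s u)"
    have sub: "vec.subspace ?U" using vec.subspace_span vec.span_singleton by metis
    have "u \<in> ?U" by (rule range_eqI[of _ _ 1]) simp
    then have ne0: "?U \<noteq> {0}" using u(1) by blast
    obtain i where i: "u $ i \<noteq> 0" using u(1) by (auto simp: Finite_Cartesian_Product.vec_eq_iff)
    obtain j :: 'n where j: "j \<noteq> i"
    proof -
      have "\<not> (UNIV::'n set) \<subseteq> {i}"
        using assms(1) card_mono[of "{i}" "UNIV::'n set"] by auto
      then show ?thesis using that by auto
    qed
    have "axis j 1 \<notin> ?U"
    proof
      assume "axis j 1 \<in> ?U"
      then obtain t where t: "axis j 1 = t *s u" by auto
      have "0 = t * u $ i" using arg_cong[OF t, of "\<lambda>v. v $ i"] j by (simp add: axis_def)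
      then have "t = 0" using i by simp
      then show False using arg_cong[OF t, of "\<lambda>v. v $ j"] by (simp add: axis_def)
    qed
    then have neU: "?U \<noteq> UNIV" by blast
    have "\<forall>x\<in>?U. a *v x \<in> ?U \<and> b *v x \<in> ?U"
    proof
      fix x assume "x \<in> ?U"
      then obtain t where t: "x = t *s u" by auto
      have "a *v x = (l * t) *s u" using sc by (simp add: t)
      moreover have "b *v x = (t * m) *s u" by (simp add: t vector_scalar_commute u(2))
      ultimately show "a *v x \<in> ?U \<and> b *v x \<in> ?U" by blast
    qed
    then show ?thesis using sub ne0 neU by blast
  next
    case nsc: False
    show ?thesis
    proof (cases "\<forall>x. a *v x = l *s x \<longrightarrow> c *v x = 0")
      case True
      let ?U = "{x. a *v x = l *s x}"
      have sub: "vec.subspace ?U"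
        unfolding vec.subspace_def
        by (simp add: matrix_vector_right_distrib vector_scalar_commute vec.scale_right_distrib)
      have ne0: "?U \<noteq> {0}" using w by blast
      have neU: "?U \<noteq> UNIV" using nsc by blast
      have "\<forall>x\<in>?U. a *v x \<in> ?U \<and> b *v x \<in> ?U"
      proof
        fix x assume x: "x \<in> ?U"
        have 1: "a *v (a *v x) = l *s (a *v x)" using x by (simp add: vector_scalar_commute)
        have "c *v x = 0" using True x by blast
        then have "a *v (b *v x) = b *v (a *v x)" using cx[of x] by simp
        also have "\<dots> = l *s (b *v x)" using x by (simp add: vector_scalar_commute)
        finally show "a *v x \<in> ?U \<and> b *v x \<in> ?U" using 1 by simp
      qed
      then show ?thesis using sub ne0 neU by blast
    next
      case False
      then obtain x0 where x0: "a *v x0 = l *s x0" "c *v x0 \<noteq> 0" by blast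
      let ?U = "range (\<lambda>x. M *v x)"
      have sub: "vec.subspace ?U"
        unfolding vec.subspace_def
        by (metis (no_types, lifting) matrix_vector_mult_0_right matrix_vector_right_distrib
            rangeE range_eqI vector_scalar_commute)
      have ne0: "?U \<noteq> {0}"
      proof -
        obtain x where "a *v x \<noteq> l *s x" using nsc by blast
        then have "M *v x \<noteq> 0" by (simp add: Mx)
        then show ?thesis by blast
      qed
      have neU: "?U \<noteq> UNIV"
      proof
        assume "?U = UNIV"
        then have "surj ((*v) M)" by simp
        then have "inj ((*v) M)"
          using vec.linear_surj_imp_inj[OF matrix_vector_mul_linear_gen] by blast
        moreover have "M *v w = M *v 0" using w by (simp add: Mx)
        ultimately show False using w(1) by (meson injD)
      qed
      have cin: "c *v x \<in> ?U" for x
      proof -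
        obtain s where s: "c *v x = s *s (c *v x0)" using rank1[OF rk x0(2)] by blast
        have "c *v x0 = M *v (b *v x0)" using cx[of x0] x0(1)
          by (simp add: Mx vector_scalar_commute)
        then have "c *v x = M *v (s *s (b *v x0))" using s by (simp add: vector_scalar_commute)
        then show ?thesis by blast
      qed
      have "\<forall>y\<in>?U. a *v y \<in> ?U \<and> b *v y \<in> ?U"
      proof
        fix y assume "y \<in> ?U"
        then obtain x where y: "y = M *v x" by auto
        have "a *v y = M *v (a *v x)"
          by (simp add: y Mx matrix_vector_mult_diff_distrib vector_scalar_commute)
        moreover have "b *v y = M *v (b *v x) - c *v x"
          by (simp add: y Mx cx matrix_vector_mult_diff_distrib vector_scalar_commute)
        moreover obtain z where "c *v x = M *v z" using cin[of x] by blast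
        ultimately have "b *v y = M *v (b *v x - z)"
          by (simp add: matrix_vector_mult_diff_distrib)
        then show "a *v y \<in> ?U \<and> b *v y \<in> ?U" using \<open>a *v y = M *v (a *v x)\<close> by blast
      qed
      then show ?thesis using sub ne0 neU by blast
    qed
  qed
qed

end
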